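(* Let $\theta\in(0,1)$ and let $P_\theta$ be the geometric distribution $p_\theta(i)=(1-\theta)\theta^i$, $i\ge0$. Then the Golomb code $\mathrm{G}k$ with $k=\lceil -1/\log_2\theta\rceil$ minimizes the maximal pointwise redundancy $R^*(N,P_\theta)=\sup_{i\ge0}\,[n(i)+\log_2 p_\theta(i)]$ over all binary prefix codes for the nonnegative integers.
   Context: A binary prefix code for the nonnegative integers assigns to each $i\ge 0$ a codeword $c(i)\in\{0,1\}^*$ such that no codeword is a prefix of another; $n(i)$ is the length of $c(i)$ and $N=\{n(i)\}$. For an integer $k\ge1$, let $b(x,k)$ ($0\le x<k$) be the $(x+1)$th codeword of the complete alphabetic binary code on $k$ items, in which the first $2^{\lceil\log_2k\rceil}-k$ items have length $\lfloor\log_2k\rfloor$ and the remaining $2k-2^{\lceil\log_2k\rceil}$ have length $\lceil\log_2k\rceil$ (empty string if $k=1$). The Golomb code $\mathrm{G}k$ assigns to $j\ge0$ the codeword $1^{\lfloor j/k\rfloor}\,0\,b(j\bmod k,k)$. *)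

theory Defs
  imports Complex_Main "HOL-Library.Sublist" "HOL-Library.Extended_Real"
begin

definition prefix_code :: "(nat \<Rightarrow> bool list) \<Rightarrow> bool" where
  "prefix_code c \<longleftrightarrow> (\<forall>i j. i \<noteq> j \<longrightarrow> \<not> prefix (c i) (c j))"

definition geom_pmf :: "real \<Rightarrow> nat \<Rightarrow> real" where
  "geom_pmf \<theta> i = (1 - \<theta>) * \<theta> ^ i"

text \<open>Maximal pointwise redundancy R*(N,P) = sup_i [n(i) + log2 p(i)], in the
  extended reals (it may be +infinity).\<close>
definition max_pointwise_redundancy :: "(nat \<Rightarrow> bool list) \<Rightarrow> (nat \<Rightarrow> real) \<Rightarrow> ereal" where
  "max_pointwise_redundancy c p = (SUP i. ereal (real (length (c i)) + log 2 (p i)))"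

definition nat_bits :: "nat \<Rightarrow> nat \<Rightarrow> bool list" where
  "nat_bits n v = map (\<lambda>i. odd (v div 2 ^ (n - 1 - i))) [0..<n]"

text \<open>b(x,k): the (x+1)th codeword of the complete alphabetic binary code on k items.
  With m = ceil(log2 k) and u = 2^m - k, the first u items get the (m-1)-bit
  (= floor(log2 k) bits when u > 0) codewords 0..u-1, the remaining ones get the m-bit
  codewords x+u; codewords are in lexicographic order.\<close>
definition alph_code :: "nat \<Rightarrow> nat \<Rightarrow> bool list" where
  "alph_code x k =
     (let m = nat \<lceil>log 2 (real k)\<rceil>; u = 2 ^ m - k in
      if x < u then nat_bits (nat \<lfloor>log 2 (real k)\<rfloor>) x else nat_bits m (x + u))"

definition golomb :: "nat \<Rightarrow> nat \<Rightarrow> bool list" where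
  "golomb k j = replicate (j div k) True @ [False] @ alph_code (j mod k) k"

end

theory Submission
  imports Defs
begin


lemma nb_len[simp]: "length (nat_bits n v) = n"
  by (simp add: nat_bits_def)

lemma nb_Suc: "nat_bits (Suc n) v = nat_bits n (v div 2) @ [odd v]"
proof -
  have "map (\<lambda>i. odd (v div 2 ^ (Suc n - 1 - i))) [0..<n] = map (\<lambda>i. odd (v div 2 div 2 ^ (n - 1 - i))) [0..<n]"
  proof (rule map_cong[OF refl])
    fix i assume "i \<in> set [0..<n]"
    then have "Suc n - 1 - i = Suc (n - 1 - i)" by auto
    then show "odd (v div 2 ^ (Suc n - 1 - i)) = odd (v div 2 div 2 ^ (n - 1 - i))"
      by (simp add: div_mult2_eq)
  qed
  then show ?thesis by (simp add: nat_bits_def)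
qed

lemma nb_inj: "v < 2^n \<Longrightarrow> w < 2^n \<Longrightarrow> nat_bits n v = nat_bits n w \<Longrightarrow> v = w"
proof (induction n arbitrary: v w)
  case 0 then show ?case by simp
next
  case (Suc n)
  have "v div 2 < 2^n" "w div 2 < 2^n" using Suc.prems by auto
  moreover have "nat_bits n (v div 2) = nat_bits n (w div 2)" "odd v = odd w"
    using Suc.prems(3) by (simp_all add: nb_Suc)
  ultimately have "v div 2 = w div 2" "odd v = odd w" using Suc.IH by auto
  then show ?case by (metis div_mult_mod_eq odd_iff_mod_2_eq_one even_iff_mod_2_eq_zero)
qed

lemma alph_eq:
  assumes "k \<ge> (1::nat)"
  obtains m where "k \<le> 2^m" "k = 1 \<Longrightarrow> m = 0" "k \<ge> 2 \<Longrightarrow> m \<ge> 1 \<and> 2^(m-1) < k"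
    "\<And>r. alph_code r k = (if r < 2^m - k then nat_bits (m-1) r else nat_bits m (r + (2^m - k)))"
proof (cases "k = 1")
  case True
  then show ?thesis by (intro that[of 0]) (auto simp: alph_code_def)
next
  case False
  then have "k \<ge> 2" using assms by auto
  then obtain i where i: "2^i < k" "k \<le> 2^(i+1)" using ex_power_ivl2[of 2 k] by auto
  have c: "\<lceil>log 2 (real k)\<rceil> = int i + 1"
    using ceiling_log_nat_eq_if[OF i] by simp
  have f: "r < 2^(i+1) - k \<Longrightarrow> nat \<lfloor>log 2 (real k)\<rfloor> = i" for r
  proof -
    assume "r < 2^(i+1) - k"
    then have "k < 2^(i+1)" by auto
    then have "\<lfloor>log 2 (real k)\<rfloor> = int i" using floor_log_nat_eq_if[of 2 i k] i by simp
    then show ?thesis by simp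
  qed
  show ?thesis
  proof (intro that[of "i+1"])
    fix r show "alph_code r k = (if r < 2^(i+1) - k then nat_bits (i+1-1) r else nat_bits (i+1) (r + (2^(i+1) - k)))"
      using f[of r] by (simp add: alph_code_def Let_def c nat_add_distrib)
  qed (use i in auto)
qed



lemma prefix_length_eq: "length xs = length ys \<Longrightarrow> prefix xs ys \<Longrightarrow> xs = ys"
  by (auto simp: prefix_def)

lemma card_bool_lists: "card {w::bool list. length w = n} = 2^n"
  using card_lists_length_eq[of "UNIV::bool set" n] by simp

lemma finite_bool_lists: "finite {w::bool list. length w = n}"
  using finite_lists_length_eq[of "UNIV::bool set" n] by simp

lemma rep_prefix: "prefix (replicate a True @ False # xs) (replicate b True @ False # ys) \<Longrightarrow> a = b \<and> prefix xs ys"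
proof (induction a arbitrary: b)
  case 0 then show ?case by (cases b) auto
next
  case (Suc a) then show ?case by (cases b) auto
qed

lemma prefix_snoc_eq: "prefix xs (ys @ [b]) \<Longrightarrow> length xs = length ys \<Longrightarrow> xs = ys"
  by (auto simp: prefix_snoc prefix_length_eq)

lemma alph_prefix:
  assumes "k \<ge> 1" "r1 < k" "r2 < k" "prefix (alph_code r1 k) (alph_code r2 k)"
  shows "r1 = r2"
proof -
  obtain m where m: "k \<le> 2^m" "k = 1 \<Longrightarrow> m = 0" "k \<ge> 2 \<Longrightarrow> m \<ge> 1 \<and> 2^(m-1) < k"
    "\<And>r. alph_code r k = (if r < 2^m - k then nat_bits (m-1) r else nat_bits m (r + (2^m - k)))"
    using alph_eq[OF assms(1)] by blast
  define u where "u = 2^m - k"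
  have uk: "u > 0 \<Longrightarrow> m \<ge> 1 \<and> u < 2^(m-1)"
  proof -
    assume "u > 0"
    then have "k \<ge> 2" using m(2) u_def assms(1) by fastforce
    then have m1: "m \<ge> 1" and mk: "2^(m-1) < k" using m(3) by auto
    have pm: "(2::nat)^m = 2 * 2^(m-1)" using m1 by (cases m) auto
    have gen: "\<And>X Y (k::nat). 0 < X \<Longrightarrow> X < k \<Longrightarrow> Y = 2*X \<Longrightarrow> Y - k < X" by arith
    have "2^m - k < (2::nat)^(m-1)" by (rule gen[OF _ mk pm]) simp
    then show ?thesis unfolding u_def using m1 by simp
  qed
  have P: "prefix (if r1 < u then nat_bits (m-1) r1 else nat_bits m (r1 + u))
                  (if r2 < u then nat_bits (m-1) r2 else nat_bits m (r2 + u))"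
    using assms(4) by (simp only: m(4) u_def)
  show ?thesis
  proof (cases "r1 < u")
    case T1: True
    then have um: "m \<ge> 1" "u < 2^(m-1)" using uk by auto
    show ?thesis
    proof (cases "r2 < u")
      case True
      with T1 P have "nat_bits (m-1) r1 = nat_bits (m-1) r2"
        by (simp add: prefix_length_eq)
      then show ?thesis using nb_inj[of r1 "m-1" r2] T1 True um by linarith
    next
      case False
      have mm: "m = Suc (m-1)" using um by auto
      have nbs: "nat_bits m (r2+u) = nat_bits (m-1) ((r2+u) div 2) @ [odd (r2+u)]"
        using um by (cases m) (auto simp: nb_Suc)
      have "prefix (nat_bits (m-1) r1) (nat_bits (m-1) ((r2+u) div 2) @ [odd (r2+u)])"
        using P T1 False nbs by simp
      then have "nat_bits (m-1) r1 = nat_bits (m-1) ((r2+u) div 2)"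
        using prefix_snoc_eq by fastforce
      moreover have "(r2+u) div 2 < 2^(m-1)"
      proof -
        have "r2 + u < 2^m" using assms(3) m(1) u_def by auto
        moreover have "(2::nat)^m = 2^(m-1) * 2" using um by (cases m) auto
        ultimately show ?thesis by (intro less_mult_imp_div_less) simp
      qed
      ultimately have "r1 = (r2+u) div 2" using nb_inj[of r1 "m-1" "(r2+u) div 2"] T1 um by linarith
      moreover have "(r2+u) div 2 \<ge> u" using False by auto
      ultimately show ?thesis using T1 by auto
    qed
  next
    case F1: False
    show ?thesis
    proof (cases "r2 < u")
      case True
      then have um: "m \<ge> 1" using uk by auto
      have "length (nat_bits m (r1+u)) \<le> length (nat_bits (m-1) r2)"
        using P F1 True prefix_length_le by fastforce
      then show ?thesis using um by simp
    next
      case False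
      with F1 P have "nat_bits m (r1+u) = nat_bits m (r2+u)"
        by (simp add: prefix_length_eq)
      moreover have "r1 + u < 2^m" "r2 + u < 2^m" using assms m(1) u_def by auto
      ultimately have "r1 + u = r2 + u" using nb_inj[of "r1+u" m "r2+u"] by simp
      then show ?thesis by simp
    qed
  qed
qed

lemma golomb_prefix: assumes "k \<ge> 1" shows "prefix_code (golomb k)"
  unfolding prefix_code_def
proof (intro allI impI notI)
  fix i j assume ij: "i \<noteq> j" and p: "prefix (golomb k i) (golomb k j)"
  from p have "i div k = j div k \<and> prefix (alph_code (i mod k) k) (alph_code (j mod k) k)"
    unfolding golomb_def by (intro rep_prefix) simp
  moreover have "i mod k < k" "j mod k < k" using assms by auto
  ultimately have "i div k = j div k" "i mod k = j mod k" using alph_prefix assms by blast+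
  then show False using ij by (metis div_mult_mod_eq)
qed

lemma kraft:
  assumes "prefix_code c" "finite I"
  shows "(\<Sum>i\<in>I. (1/2::real)^length (c i)) \<le> 1"
proof (cases "I = {}")
  case True then show ?thesis by simp
next
  case False
  define L where "L = Max ((\<lambda>i. length (c i)) ` I)"
  have Lge: "i \<in> I \<Longrightarrow> length (c i) \<le> L" for i unfolding L_def using assms(2) by auto
  define E where "E i = (\<lambda>w. c i @ w) ` {w. set w \<subseteq> (UNIV::bool set) \<and> length w = L - length (c i)}" for i
  have cardE: "card (E i) = 2^(L - length (c i))" for i
  proof -
    have "card (E i) = card {w. set w \<subseteq> (UNIV::bool set) \<and> length w = L - length (c i)}"
      unfolding E_def by (rule card_image) (simp add: inj_on_def)
    then show ?thesis by (simp add: card_bool_lists)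
  qed
  have finE: "finite (E i)" for i unfolding E_def by (simp add: finite_bool_lists)
  have disj: "\<forall>i\<in>I. \<forall>j\<in>I. i \<noteq> j \<longrightarrow> E i \<inter> E j = {}"
  proof (intro ballI impI)
    fix i j assume "i \<in> I" "j \<in> I" "i \<noteq> j"
    show "E i \<inter> E j = {}"
    proof (rule ccontr)
      assume "E i \<inter> E j \<noteq> {}"
      then obtain v where "v \<in> E i" "v \<in> E j" by blast
      then have "prefix (c i) v" "prefix (c j) v" unfolding E_def by (auto simp: prefix_def)
      then have "prefix (c i) (c j) \<or> prefix (c j) (c i)" using prefix_same_cases by blast
      then show False using assms(1) \<open>i \<noteq> j\<close> unfolding prefix_code_def by metis
    qed
  qed
  have sub: "(\<Union>i\<in>I. E i) \<subseteq> {w. set w \<subseteq> (UNIV::bool set) \<and> length w = L}"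
    using Lge unfolding E_def by auto
  have "(\<Sum>i\<in>I. card (E i)) = card (\<Union>i\<in>I. E i)"
    using card_UN_disjoint[OF assms(2) _ disj] finE by simp
  also have "\<dots> \<le> card {w. set w \<subseteq> (UNIV::bool set) \<and> length w = L}"
    by (rule card_mono[OF _ sub]) (simp add: finite_bool_lists)
  also have "\<dots> = 2^L" by (simp add: card_bool_lists)
  finally have N: "(\<Sum>i\<in>I. (2::nat)^(L - length (c i))) \<le> 2^L" using cardE by simp
  have "(\<Sum>i\<in>I. (1/2::real)^length (c i)) = (\<Sum>i\<in>I. real (2^(L - length (c i)))) / 2^L"
    unfolding sum_divide_distrib
  proof (rule sum.cong[OF refl])
    fix i assume "i \<in> I"
    then have "L = (L - length (c i)) + length (c i)" using Lge by simp
    then have "(2::real)^L = 2^(L - length (c i)) * 2^length (c i)" by (metis power_add)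
    then show "(1/2::real)^length (c i) = real (2^(L - length (c i))) / 2^L"
      by (simp add: power_one_over field_simps)
  qed
  also have "\<dots> \<le> 1"
  proof -
    have "(\<Sum>i\<in>I. real (2^(L - length (c i)))) \<le> 2^L"
    proof -
      have "real (\<Sum>i\<in>I. (2::nat)^(L - length (c i))) \<le> real ((2::nat)^L)" using N of_nat_le_iff by blast
      then show ?thesis by simp
    qed
    then show ?thesis by simp
  qed
  finally show ?thesis .
qed



lemma blocksum: "t \<le> n \<Longrightarrow> (\<Sum>r<n. (if r < t then (A::real) else B)) = real t * A + real (n - t) * B"
proof (induction n)
  case 0 then show ?case by simp
next
  case (Suc n)
  show ?case
  proof (cases "t = Suc n")
    case True
    then have "(\<Sum>r<Suc n. (if r < t then A else B)) = (\<Sum>r<Suc n. A)" by (intro sum.cong) auto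
    then show ?thesis using True by simp
  next
    case False
    then have "t \<le> n" using Suc.prems by simp
    then show ?thesis using Suc.IH by (simp add: Suc_diff_le algebra_simps)
  qed
qed

lemma key:
  fixes a :: real and k s :: nat
  assumes a: "a > 0" and k1: "k \<ge> 1" and ka1: "(real k - 1) * a < 1" and ka2: "1 \<le> real k * a"
    and pc: "prefix_code c" and sk: "s < k"
  shows "\<exists>i. 1 + real (length (alph_code s k)) - real s * a \<le> real (length (c i)) - real i * a"
proof -
  obtain m where m: "k \<le> 2^m" "k = 1 \<Longrightarrow> m = 0" "k \<ge> 2 \<Longrightarrow> m \<ge> 1 \<and> 2^(m-1) < k"
    "\<And>r. alph_code r k = (if r < 2^m - k then nat_bits (m-1) r else nat_bits m (r + (2^m - k)))"
    using alph_eq[OF k1] by blast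
  define u where "u = 2^m - k"
  define l where "l r = (if r < u then m - 1 else m)" for r
  have lal: "length (alph_code r k) = l r" for r using m(4) unfolding l_def u_def by simp
  show ?thesis
  proof (cases "k = 1")
    case True
    then have "s = 0" "m = 0" using sk m(2) by auto
    then have l0: "length (alph_code s k) = 0" using lal l_def by simp
    have "c 0 \<noteq> []"
    proof
      assume "c 0 = []"
      then have "prefix (c 0) (c 1)" by simp
      then show False using pc unfolding prefix_code_def by (metis zero_neq_one)
    qed
    then have "length (c 0) \<ge> 1" by (cases "c 0") auto
    then show ?thesis using l0 \<open>s = 0\<close> by (intro exI[of _ 0]) simp
  next
    case False
    then have k2: "k \<ge> 2" using k1 by simp
    then have m1: "m \<ge> 1" and mk: "2^(m-1) < k" using m(3) by auto
    have pm: "(2::nat)^m = 2 * 2^(m-1)" using m1 by (cases m) auto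
    have uk: "u + 2 \<le> k" using pm mk m(1) unfolding u_def by linarith
    have ureal: "real u + real k = 2^m" using m(1) unfolding u_def by (simp add: of_nat_diff)
    define k' where "k' = k - 1"
    have k'1: "k' \<ge> 1" and rk': "real k' = real k - 1" using k2 unfolding k'_def by (auto simp: of_nat_diff)
    define l' where "l' r = (if r < u + 1 then m - 1 else m)" for r
    define M where "M i = i div k' + 1 + l' (i mod k')" for i
    define T where "T = 1 + real (length (alph_code s k)) - real s * a"
    show ?thesis
    proof (rule ccontr)
      assume "\<not> ?thesis"
      then have H: "real (length (c i)) - real i * a < T" for i unfolding T_def by (meson not_le)
      have Bsum: "(\<Sum>r<k'. (1/2::real)^l' r) = 1"
      proof -
        have "(\<Sum>r<k'. (1/2::real)^l' r) = (\<Sum>r<k'. if r < u+1 then (1/2::real)^(m-1) else (1/2)^m)"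
          unfolding l'_def by (intro sum.cong) auto
        also have "\<dots> = real (u+1) * (1/2)^(m-1) + real (k' - (u+1)) * (1/2)^m"
          using uk unfolding k'_def by (intro blocksum) simp
        also have "\<dots> = (real u + real k) * (1/2)^m"
        proof -
          have e1: "(1/2::real)^(m-1) = 2 * (1/2)^m" using m1 by (cases m) auto
          have e2: "real (k' - (u+1)) = real k - 2 - real u" using uk unfolding k'_def by (simp add: of_nat_diff)
          show ?thesis unfolding e1 e2 by (simp add: algebra_simps)
        qed
        also have "\<dots> = 1" using ureal by (simp add: power_one_over)
        finally show ?thesis .
      qed
      have Msum: "(\<Sum>i<P*k'. (1/2::real)^M i) = 1 - (1/2)^P" for P
      proof (induction P)
        case 0 then show ?case by simp
      next
        case (Suc P)
        have "{..<Suc P * k'} = {0..<P*k'} \<union> {P*k'..<P*k'+k'}" by auto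
        then have "(\<Sum>i<Suc P*k'. (1/2::real)^M i) = (\<Sum>i\<in>{0..<P*k'}. (1/2::real)^M i) + (\<Sum>i\<in>{P*k'..<P*k'+k'}. (1/2::real)^M i)"
          by (simp add: sum.union_disjoint ivl_disj_int)
        also have "(\<Sum>i\<in>{0..<P*k'}. (1/2::real)^M i) = 1 - (1/2)^P" using Suc.IH by (simp add: atLeast0LessThan)
        also have "(\<Sum>i\<in>{P*k'..<P*k'+k'}. (1/2::real)^M i) = (\<Sum>r<k'. (1/2::real)^M (r + P*k'))"
          using sum.shift_bounds_nat_ivl[of "\<lambda>i. (1/2::real)^M i" 0 "P*k'" k'] by (simp add: atLeast0LessThan add.commute)
        also have "\<dots> = (\<Sum>r<k'. (1/2::real)^(Suc P) * (1/2)^l' r)"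
        proof (rule sum.cong[OF refl])
          fix r assume "r \<in> {..<k'}"
          then have "(r + P*k') div k' = P" "(r + P*k') mod k' = r" using k'1 by auto
          then have "M (r + P*k') = Suc P + l' r" unfolding M_def by simp
          then show "(1/2::real)^M (r + P*k') = (1/2)^(Suc P) * (1/2)^l' r" by (simp add: power_add)
        qed
        also have "\<dots> = (1/2)^(Suc P)" by (simp only: sum_distrib_left[symmetric] Bsum mult_1_right)
        finally show ?case by simp
      qed
      have lineq: "real (l s) + (real r - real s) * a \<le> 1 + real (l' r)" if "r < k'" for r
      proof (cases "r \<le> s")
        case True
        then have "(real r - real s) * a \<le> 0" using a by (simp add: mult_nonpos_nonneg)
        moreover have "l s \<le> 1 + l' r" unfolding l_def l'_def by auto
        ultimately show ?thesis by linarith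
      next
        case False
        then have "l s \<le> l' r" unfolding l_def l'_def by auto
        moreover have "(real r - real s) * a \<le> (real k - 1) * a"
          using that a rk' by (intro mult_right_mono) auto
        ultimately show ?thesis using ka1 by linarith
      qed
      have nM: "length (c i) \<le> M i" for i
      proof -
        define q where "q = i div k'"
        define r where "r = i mod k'"
        have ri: "real i = real q * real k' + real r" unfolding q_def r_def
          by (metis div_mult_mod_eq of_nat_add of_nat_mult)
        have rk: "r < k'" unfolding r_def using k'1 by auto
        have qa: "real q * (real k' * a) \<le> real q" using ka1 rk' by (simp add: mult_left_le)
        have "T + real i * a \<le> real (M i) + 1"
          using lineq[OF rk] qa lal[of s] unfolding T_def M_def ri q_def[symmetric] r_def[symmetric]
          by (simp add: algebra_simps)
        then have "real (length (c i)) < real (M i) + 1" using H[of i] by linarith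
        then show ?thesis by linarith
      qed
      have pos: "0 < 1 - real k' * a" using ka1 rk' by simp
      obtain Q where Q: "T < real Q * (1 - real k' * a)" using reals_Archimedean3[OF pos] by blast
      define i0 where "i0 = Q * k'"
      have Mi0: "M i0 = Q + 1 + l' 0" unfolding M_def i0_def using k'1 by simp
      have "real (length (c i0)) < T + real i0 * a" using H[of i0] by linarith
      also have "\<dots> < real Q" using Q unfolding i0_def by (simp add: algebra_simps)
      also have "\<dots> < real (M i0)" using Mi0 by simp
      finally have ni0: "length (c i0) + 1 \<le> M i0" by linarith
      define P where "P = Q + M i0 + 1"
      have i0P: "i0 \<in> {..<P*k'}"
      proof -
        have "Q*k' < P*k'" using k'1 unfolding P_def by (intro mult_less_mono1) auto
        then show ?thesis unfolding i0_def by simp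
      qed
      have fg: "(1/2::real)^M i \<le> (1/2)^length (c i)" for i
        using nM[of i] by (intro power_decreasing) auto
      have "(\<Sum>i<P*k'. (1/2::real)^length (c i)) - (\<Sum>i<P*k'. (1/2::real)^M i)
            = (\<Sum>i<P*k'. (1/2::real)^length (c i) - (1/2::real)^M i)" by (simp add: sum_subtractf)
      also have "\<dots> \<ge> (1/2::real)^length (c i0) - (1/2::real)^M i0"
        using fg i0P by (intro member_le_sum) auto
      finally have s1: "(\<Sum>i<P*k'. (1/2::real)^length (c i)) \<ge> (1 - (1/2)^P) + ((1/2::real)^length (c i0) - (1/2::real)^M i0)"
        using Msum[of P] by simp
      have "(1/2::real)^M i0 \<le> (1/2)^(length (c i0) + 1)" using ni0 by (intro power_decreasing) auto
      then have s2: "(1/2::real)^length (c i0) - (1/2::real)^M i0 \<ge> (1/2)^M i0" by simp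
      have s3: "(1/2::real)^P < (1/2)^M i0" unfolding P_def by (intro power_strict_decreasing) auto
      have "(\<Sum>i<P*k'. (1/2::real)^length (c i)) > 1" using s1 s2 s3 by linarith
      moreover have "(\<Sum>i<P*k'. (1/2::real)^length (c i)) \<le> 1" using kraft[OF pc] by simp
      ultimately show False by simp
    qed
  qed
qed



theorem theorem4:
  fixes \<theta> :: real
  assumes "0 < \<theta>" and "\<theta> < 1"
  defines "k \<equiv> nat \<lceil>- 1 / log 2 \<theta>\<rceil>"
  shows "prefix_code (golomb k) \<and>
         (\<forall>c. prefix_code c \<longrightarrow>
            max_pointwise_redundancy (golomb k) (geom_pmf \<theta>)
              \<le> max_pointwise_redundancy c (geom_pmf \<theta>))"
proof -
  define a where "a = - log 2 \<theta>"
  have "log 2 \<theta> < log 2 1" using assms(1,2) by (subst log_less_cancel_iff) auto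
  then have a: "a > 0" unfolding a_def by simp
  have kdef: "k = nat \<lceil>1 / a\<rceil>" unfolding k_def a_def by simp
  have c1: "\<lceil>1 / a\<rceil> \<ge> 1" using a by simp
  have rk: "real k = of_int \<lceil>1 / a\<rceil>" using c1 unfolding kdef by simp
  have k1: "k \<ge> 1" using c1 unfolding kdef by linarith
  have "real k \<ge> 1 / a" using rk by (simp add: le_of_int_ceiling)
  then have ka2: "1 \<le> real k * a" using a by (simp add: field_simps)
  have "real k < 1 / a + 1" using rk using ceiling_correct[of "1/a"] by linarith
  then have ka1: "(real k - 1) * a < 1" using a by (simp add: field_simps)
  have logp: "log 2 (geom_pmf \<theta> i) = log 2 (1 - \<theta>) - real i * a" for i
    unfolding geom_pmf_def a_def using assms(1,2) by (simp add: log_mult log_nat_power)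
  have pk: "prefix_code (golomb k)" using golomb_prefix[OF k1] .
  have "max_pointwise_redundancy (golomb k) (geom_pmf \<theta>) \<le> max_pointwise_redundancy c (geom_pmf \<theta>)"
    if pc: "prefix_code c" for c
    unfolding max_pointwise_redundancy_def
  proof (rule SUP_least)
    fix j
    define q where "q = j div k"
    define s where "s = j mod k"
    have sk: "s < k" unfolding s_def using k1 by simp
    have rj: "real j = real q * real k + real s" unfolding q_def s_def
      by (metis div_mult_mod_eq of_nat_add of_nat_mult)
    have lg: "length (golomb k j) = q + 1 + length (alph_code s k)"
      unfolding golomb_def q_def s_def by simp
    obtain i where i: "1 + real (length (alph_code s k)) - real s * a \<le> real (length (c i)) - real i * a"
      using key[OF a k1 ka1 ka2 pc sk] by blast
    have qa: "real q \<le> real q * (real k * a)" using ka2 by (simp add: mult_le_cancel_left1)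
    have "real (length (golomb k j)) + log 2 (geom_pmf \<theta> j) \<le> real (length (c i)) + log 2 (geom_pmf \<theta> i)"
      using i qa unfolding logp lg rj by (simp add: algebra_simps)
    then have "ereal (real (length (golomb k j)) + log 2 (geom_pmf \<theta> j)) \<le> ereal (real (length (c i)) + log 2 (geom_pmf \<theta> i))"
      by simp
    also have "\<dots> \<le> (SUP i. ereal (real (length (c i)) + log 2 (geom_pmf \<theta> i)))"
      by (rule SUP_upper) simp
    finally show "ereal (real (length (golomb k j)) + log 2 (geom_pmf \<theta> j)) \<le> (SUP i. ereal (real (length (c i)) + log 2 (geom_pmf \<theta> i)))" .
  qed
  then show ?thesis using pk by blast
qed

end
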